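(* Let $r$, $n$, $t$ be positive integers with $2\le t\le r-1$ and $n=3r-t$. Then: (1) if $t\le \frac{r+5}{5}$, then $\rho_2(K(n,r))=3$; (2) if $\frac{r+5}{5}<t\le \frac{2r+9}{9}$, then $\rho_2(K(n,r))=4$.
   Context: For integers $n\ge 2r$, the Kneser graph $K(n,r)$ has as vertices the $r$-element subsets of $[n]=\{1,\dots,n\}$, two vertices being adjacent iff they are disjoint. A $2$-packing of a graph $G$ is a set of vertices pairwise at distance at least $3$ in $G$; $\rho_2(G)$ is the maximum cardinality of a $2$-packing. *)

theory Defs
  imports Complex_Main
begin

definition kneser_vertices :: "nat \<Rightarrow> nat \<Rightarrow> nat set set" where
  "kneser_vertices n r = {A. A \<subseteq> {1..n} \<and> card A = r}"

definition kneser_adj :: "nat \<Rightarrow> nat \<Rightarrow> nat set \<Rightarrow> nat set \<Rightarrow> bool" where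
  "kneser_adj n r A B \<longleftrightarrow> A \<in> kneser_vertices n r \<and> B \<in> kneser_vertices n r \<and> A \<inter> B = {}"

definition dist_at_least :: "('a \<Rightarrow> 'a \<Rightarrow> bool) \<Rightarrow> nat \<Rightarrow> 'a \<Rightarrow> 'a \<Rightarrow> bool" where
  "dist_at_least E d u v \<longleftrightarrow> (\<forall>k<d. \<not> (E ^^ k) u v)"

definition is_2_packing :: "'a set \<Rightarrow> ('a \<Rightarrow> 'a \<Rightarrow> bool) \<Rightarrow> 'a set \<Rightarrow> bool" where
  "is_2_packing V E S \<longleftrightarrow> S \<subseteq> V \<and> (\<forall>u\<in>S. \<forall>v\<in>S. u \<noteq> v \<longrightarrow> dist_at_least E 3 u v)"

definition packing_number_2 :: "'a set \<Rightarrow> ('a \<Rightarrow> 'a \<Rightarrow> bool) \<Rightarrow> nat" where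
  "packing_number_2 V E = Max {card S | S. finite S \<and> is_2_packing V E S}"

definition rho2_kneser :: "nat \<Rightarrow> nat \<Rightarrow> nat" where
  "rho2_kneser n r = packing_number_2 (kneser_vertices n r) (kneser_adj n r)"

end

theory Submission imports Defs begin

lemma dist3: "dist_at_least E 3 u v \<longleftrightarrow> u \<noteq> v \<and> \<not> E u v \<and> \<not> (\<exists>w. E u w \<and> E w v)"
proof -
  have "(E ^^ 2) u v \<longleftrightarrow> (\<exists>w. E u w \<and> E w v)"
    by (simp add: numeral_2_eq_2 relcompp_apply)
  moreover have "(\<forall>k<3. P k) \<longleftrightarrow> P 0 \<and> P 1 \<and> P 2" for P :: "nat \<Rightarrow> bool"
    by (auto simp: numeral_3_eq_3 numeral_2_eq_2 less_Suc_eq)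
  ultimately show ?thesis unfolding dist_at_least_def by auto
qed

lemma pair_char:
  assumes u: "u \<in> kneser_vertices n r" and v: "v \<in> kneser_vertices n r" and "u \<noteq> v"
  shows "dist_at_least (kneser_adj n r) 3 u v \<longleftrightarrow> u \<inter> v \<noteq> {} \<and> card (u \<inter> v) + n < 3 * r"
proof -
  have fu: "finite u" "finite v" "u \<subseteq> {1..n}" "v \<subseteq> {1..n}" "card u = r" "card v = r"
    using u v by (auto simp: kneser_vertices_def intro: finite_subset)
  have cu: "card (u \<union> v) + card (u \<inter> v) = 2 * r" using card_Un_Int[of u v] fu by simp
  have cc: "card ({1..n} - (u \<union> v)) = n - card (u \<union> v)"
    using fu by (subst card_Diff_subset) auto
  have cun: "card (u \<union> v) \<le> n" using fu card_mono[of "{1..n}" "u \<union> v"] by auto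
  have "(\<exists>w. kneser_adj n r u w \<and> kneser_adj n r w v) \<longleftrightarrow> r \<le> card ({1..n} - (u \<union> v))"
  proof
    assume "\<exists>w. kneser_adj n r u w \<and> kneser_adj n r w v"
    then obtain w where "kneser_adj n r u w" "kneser_adj n r w v" by blast
    then have w: "w \<subseteq> {1..n} - (u \<union> v)" "card w = r"
      by (auto simp: kneser_adj_def kneser_vertices_def)
    then show "r \<le> card ({1..n} - (u \<union> v))" by (metis card_mono finite_Diff finite_atLeastAtMost)
  next
    assume "r \<le> card ({1..n} - (u \<union> v))"
    then obtain w where "w \<subseteq> {1..n} - (u \<union> v)" "card w = r"
      by (meson obtain_subset_with_card_n)
    then show "\<exists>w. kneser_adj n r u w \<and> kneser_adj n r w v"
      using u v by (auto simp: kneser_adj_def kneser_vertices_def)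
  qed
  then show ?thesis using assms cc cu cun by (auto simp: dist3 kneser_adj_def)
qed


definition good :: "nat \<Rightarrow> nat \<Rightarrow> nat set \<Rightarrow> nat set \<Rightarrow> bool" where
  "good n r X Y \<longleftrightarrow> X \<inter> Y \<noteq> {} \<and> card (X \<inter> Y) + n < 3 * r \<and> card (X \<inter> Y) < r"

lemma good_sym: "good n r X Y \<Longrightarrow> good n r Y X"
  by (simp add: good_def Int_commute)

lemma good_ne: "X \<in> kneser_vertices n r \<Longrightarrow> good n r X Y \<Longrightarrow> X \<noteq> Y"
  by (auto simp: good_def kneser_vertices_def)

lemma packI:
  assumes "S \<subseteq> kneser_vertices n r"
    and "\<And>u v. u \<in> S \<Longrightarrow> v \<in> S \<Longrightarrow> u \<noteq> v \<Longrightarrow> good n r u v"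
  shows "is_2_packing (kneser_vertices n r) (kneser_adj n r) S"
  using assms pair_char unfolding is_2_packing_def good_def by (metis subsetD)

lemma pack3:
  assumes V: "X \<in> kneser_vertices n r" "Y \<in> kneser_vertices n r" "Z \<in> kneser_vertices n r"
    and g: "good n r X Y" "good n r X Z" "good n r Y Z"
  shows "is_2_packing (kneser_vertices n r) (kneser_adj n r) {X,Y,Z} \<and> card {X,Y,Z} = 3"
proof
  show "is_2_packing (kneser_vertices n r) (kneser_adj n r) {X,Y,Z}"
    apply (rule packI) using V g good_sym[OF g(1)] good_sym[OF g(2)] good_sym[OF g(3)] by auto
  have "X \<noteq> Y" "X \<noteq> Z" "Y \<noteq> Z" using V g good_ne by blast+
  then show "card {X,Y,Z} = 3" by simp
qed

lemma pack4:
  assumes V: "X \<in> kneser_vertices n r" "Y \<in> kneser_vertices n r" "Z \<in> kneser_vertices n r"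
     "W \<in> kneser_vertices n r"
    and g: "good n r X Y" "good n r X Z" "good n r Y Z" "good n r X W" "good n r Y W" "good n r Z W"
  shows "is_2_packing (kneser_vertices n r) (kneser_adj n r) {X,Y,Z,W} \<and> card {X,Y,Z,W} = 4"
proof
  show "is_2_packing (kneser_vertices n r) (kneser_adj n r) {X,Y,Z,W}"
    apply (rule packI) using V g good_sym[OF g(1)] good_sym[OF g(2)] good_sym[OF g(3)]
      good_sym[OF g(4)] good_sym[OF g(5)] good_sym[OF g(6)] by auto
  have "X \<noteq> Y" "X \<noteq> Z" "Y \<noteq> Z" "X \<noteq> W" "Y \<noteq> W" "Z \<noteq> W" using V g good_ne by blast+
  then show "card {X,Y,Z,W} = 4" by simp
qed

lemma packD:
  assumes "is_2_packing (kneser_vertices n r) (kneser_adj n r) S" "u \<in> S" "v \<in> S" "u \<noteq> v"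
  shows "card (u \<inter> v) + n < 3 * r"
  using assms pair_char unfolding is_2_packing_def by (metis subsetD)

lemma rho_eqI:
  assumes "finite S0" "is_2_packing (kneser_vertices n r) (kneser_adj n r) S0" "card S0 = k"
    and "\<And>S. finite S \<Longrightarrow> is_2_packing (kneser_vertices n r) (kneser_adj n r) S \<Longrightarrow> card S \<le> k"
  shows "rho2_kneser n r = k"
  unfolding rho2_kneser_def packing_number_2_def
proof (rule Max_eqI)
  show "finite {card S |S. finite S \<and> is_2_packing (kneser_vertices n r) (kneser_adj n r) S}"
    by (rule finite_subset[of _ "{..k}"]) (use assms(4) in auto)
qed (use assms in auto)

lemma ci: "card (A \<inter> (B \<union> C)) \<le> card (A \<inter> B) + card (A \<inter> C)"
proof -
  have "A \<inter> (B \<union> C) = (A \<inter> B) \<union> (A \<inter> C)" by blast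
  then show ?thesis using card_Un_le[of "A \<inter> B" "A \<inter> C"] by simp
qed

lemma b3:
  assumes "finite A" "finite B" "finite C"
  shows "card A + card B + card C \<le> card (A \<union> B \<union> C) + card (A \<inter> B) + card (A \<inter> C) + card (B \<inter> C)"
proof -
  have 1: "card A + card (B \<union> C) = card (A \<union> (B \<union> C)) + card (A \<inter> (B \<union> C))"
    using assms card_Un_Int[of A "B \<union> C"] by blast
  have 2: "card B + card C = card (B \<union> C) + card (B \<inter> C)"
    using assms card_Un_Int[of B C] by blast
  have 3: "card (A \<inter> (B \<union> C)) \<le> card (A \<inter> B) + card (A \<inter> C)" by (rule ci)
  show ?thesis using 1 2 3 by (simp add: Un_assoc)
qed

lemma b4:
  assumes "finite A" "finite B" "finite C" "finite D"
  shows "card A + card B + card C + card D \<le> card (A \<union> B \<union> C \<union> D) + card (A \<inter> B) + card (A \<inter> C)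
     + card (A \<inter> D) + card (B \<inter> C) + card (B \<inter> D) + card (C \<inter> D)"
proof -
  have 1: "card A + card (B \<union> C \<union> D) = card (A \<union> (B \<union> C \<union> D)) + card (A \<inter> (B \<union> C \<union> D))"
    using assms card_Un_Int[of A "B \<union> C \<union> D"] by blast
  have 2: "card B + card C + card D \<le> card (B \<union> C \<union> D) + card (B \<inter> C) + card (B \<inter> D) + card (C \<inter> D)"
    by (rule b3[OF assms(2,3,4)])
  have 3: "card (A \<inter> (B \<union> C \<union> D)) \<le> card (A \<inter> B) + card (A \<inter> C) + card (A \<inter> D)"
    using ci[of A "B \<union> C" D] ci[of A B C] by linarith
  have 4: "A \<union> (B \<union> C \<union> D) = A \<union> B \<union> C \<union> D" by auto
  show ?thesis using 1[unfolded 4] 2 3 by linarith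
qed

lemma b5:
  assumes "finite A" "finite B" "finite C" "finite D" "finite E"
  shows "card A + card B + card C + card D + card E \<le> card (A \<union> B \<union> C \<union> D \<union> E) + card (A \<inter> B) + card (A \<inter> C)
     + card (A \<inter> D) + card (A \<inter> E) + card (B \<inter> C) + card (B \<inter> D) + card (B \<inter> E) + card (C \<inter> D)
     + card (C \<inter> E) + card (D \<inter> E)"
proof -
  have 1: "card A + card (B \<union> C \<union> D \<union> E) = card (A \<union> (B \<union> C \<union> D \<union> E)) + card (A \<inter> (B \<union> C \<union> D \<union> E))"
    using assms card_Un_Int[of A "B \<union> C \<union> D \<union> E"] by blast
  have 2: "card B + card C + card D + card E \<le> card (B \<union> C \<union> D \<union> E) + card (B \<inter> C) + card (B \<inter> D) + card (B \<inter> E)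
     + card (C \<inter> D) + card (C \<inter> E) + card (D \<inter> E)"
    by (rule b4[OF assms(2,3,4,5)])
  have 3: "card (A \<inter> (B \<union> C \<union> D \<union> E)) \<le> card (A \<inter> B) + card (A \<inter> C) + card (A \<inter> D) + card (A \<inter> E)"
    using ci[of A "B \<union> C \<union> D" E] ci[of A "B \<union> C" D] ci[of A B C] by linarith
  have 4: "A \<union> (B \<union> C \<union> D \<union> E) = A \<union> B \<union> C \<union> D \<union> E" by auto
  show ?thesis using 1[unfolded 4] 2 3 by linarith
qed

lemma pick: "finite S \<Longrightarrow> Suc k \<le> card S \<Longrightarrow> \<exists>x\<in>S. k \<le> card (S - {x}) \<and> finite (S - {x})"
proof -
  assume a: "finite S" "Suc k \<le> card S"
  then have "S \<noteq> {}" by auto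
  then obtain x where x: "x \<in> S" by blast
  then have "card (S - {x}) = card S - 1" using a by simp
  then show ?thesis using x a by auto
qed

lemma vfacts: "X \<in> kneser_vertices n r \<Longrightarrow> finite X \<and> card X = r \<and> X \<subseteq> {1..n}"
  by (auto simp: kneser_vertices_def intro: finite_subset)

lemma arith4:
  fixes a b c d u i1 i2 i3 i4 i5 i6 n r :: nat
  assumes "a + b + c + d \<le> u + i1 + i2 + i3 + i4 + i5 + i6" "a = r" "b = r" "c = r" "d = r" "u \<le> n"
    "i1 + n < 3 * r" "i2 + n < 3 * r" "i3 + n < 3 * r" "i4 + n < 3 * r" "i5 + n < 3 * r" "i6 + n < 3 * r"
  shows "4 * r + 5 * n + 6 \<le> 18 * r"
  using assms by (auto simp: algebra_simps)

lemma arith5: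
  fixes a b c d e u i1 i2 i3 i4 i5 i6 i7 i8 i9 i10 n r :: nat
  assumes "a + b + c + d + e \<le> u + i1 + i2 + i3 + i4 + i5 + i6 + i7 + i8 + i9 + i10"
    "a = r" "b = r" "c = r" "d = r" "e = r" "u \<le> n"
    "i1 + n < 3 * r" "i2 + n < 3 * r" "i3 + n < 3 * r" "i4 + n < 3 * r" "i5 + n < 3 * r" "i6 + n < 3 * r"
    "i7 + n < 3 * r" "i8 + n < 3 * r" "i9 + n < 3 * r" "i10 + n < 3 * r"
  shows "5 * r + 9 * n + 10 \<le> 30 * r"
  using assms by (auto simp: algebra_simps)

lemma upper4:
  assumes "finite S" "is_2_packing (kneser_vertices n r) (kneser_adj n r) S" "4 \<le> card S"
  shows "4 * r + 5 * n + 6 \<le> 18 * r"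
proof -
  obtain A where A: "A \<in> S" "3 \<le> card (S - {A})" "finite (S - {A})" using pick[of S 3] assms by auto
  obtain B where B: "B \<in> S - {A}" "2 \<le> card (S - {A} - {B})" "finite (S - {A} - {B})" using pick[of "S - {A}" 2] A by auto
  obtain C where C: "C \<in> S - {A} - {B}" "1 \<le> card (S - {A} - {B} - {C})" "finite (S - {A} - {B} - {C})"
    using pick[of "S - {A} - {B}" 1] B by auto
  obtain D where D: "D \<in> S - {A} - {B} - {C}" using pick[of "S - {A} - {B} - {C}" 0] C by auto
  have inS: "A \<in> S" "B \<in> S" "C \<in> S" "D \<in> S" using A(1) B(1) C(1) D by blast+
  have ne: "A \<noteq> B" "A \<noteq> C" "A \<noteq> D" "B \<noteq> C" "B \<noteq> D" "C \<noteq> D" using A(1) B(1) C(1) D by blast+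
  have V: "S \<subseteq> kneser_vertices n r" using assms(2) by (simp add: is_2_packing_def)
  have F: "finite X \<and> card X = r \<and> X \<subseteq> {1..n}" if "X \<in> S" for X using that V vfacts by blast
  note FA = F[OF inS(1)] and FB = F[OF inS(2)] and FC = F[OF inS(3)] and FD = F[OF inS(4)]
  have P: "card (X \<inter> Y) + n < 3 * r" if "X \<in> S" "Y \<in> S" "X \<noteq> Y" for X Y
    using packD[OF assms(2)] that by blast
  have U: "card (A \<union> B \<union> C \<union> D) \<le> n"
  proof -
    have "A \<union> B \<union> C \<union> D \<subseteq> {1..n}" using FA FB FC FD by blast
    from card_mono[OF _ this] show ?thesis by simp
  qed
  have "card A + card B + card C + card D \<le> card (A \<union> B \<union> C \<union> D) + card (A \<inter> B) + card (A \<inter> C)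
     + card (A \<inter> D) + card (B \<inter> C) + card (B \<inter> D) + card (C \<inter> D)"
    by (rule b4[OF FA[THEN conjunct1] FB[THEN conjunct1] FC[THEN conjunct1] FD[THEN conjunct1]])
  moreover have "card A = r" "card B = r" "card C = r" "card D = r" using FA FB FC FD by blast+
  moreover have "card (A \<inter> B) + n < 3 * r" "card (A \<inter> C) + n < 3 * r" "card (A \<inter> D) + n < 3 * r"
    "card (B \<inter> C) + n < 3 * r" "card (B \<inter> D) + n < 3 * r" "card (C \<inter> D) + n < 3 * r"
    using P[OF inS(1) inS(2) ne(1)] P[OF inS(1) inS(3) ne(2)] P[OF inS(1) inS(4) ne(3)] P[OF inS(2) inS(3) ne(4)] P[OF inS(2) inS(4) ne(5)] P[OF inS(3) inS(4) ne(6)] by simp_all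
  ultimately show ?thesis by (rule arith4[OF _ _ _ _ _ U])
qed

lemma upper5:
  assumes "finite S" "is_2_packing (kneser_vertices n r) (kneser_adj n r) S" "5 \<le> card S"
  shows "5 * r + 9 * n + 10 \<le> 30 * r"
proof -
  obtain A where A: "A \<in> S" "4 \<le> card (S - {A})" "finite (S - {A})" using pick[of S 4] assms by auto
  obtain B where B: "B \<in> S - {A}" "3 \<le> card (S - {A} - {B})" "finite (S - {A} - {B})" using pick[of "S - {A}" 3] A by auto
  obtain C where C: "C \<in> S - {A} - {B}" "2 \<le> card (S - {A} - {B} - {C})" "finite (S - {A} - {B} - {C})"
    using pick[of "S - {A} - {B}" 2] B by auto
  obtain D where D: "D \<in> S - {A} - {B} - {C}" "1 \<le> card (S - {A} - {B} - {C} - {D})"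
    "finite (S - {A} - {B} - {C} - {D})"
    using pick[of "S - {A} - {B} - {C}" 1] C by auto
  obtain E where E: "E \<in> S - {A} - {B} - {C} - {D}" using pick[of "S - {A} - {B} - {C} - {D}" 0] D by auto
  have inS: "A \<in> S" "B \<in> S" "C \<in> S" "D \<in> S" "E \<in> S" using A(1) B(1) C(1) D(1) E by blast+
  have ne: "A \<noteq> B" "A \<noteq> C" "A \<noteq> D" "A \<noteq> E" "B \<noteq> C" "B \<noteq> D" "B \<noteq> E" "C \<noteq> D" "C \<noteq> E" "D \<noteq> E"
    using A(1) B(1) C(1) D(1) E by blast+
  have V: "S \<subseteq> kneser_vertices n r" using assms(2) by (simp add: is_2_packing_def)
  have F: "finite X \<and> card X = r \<and> X \<subseteq> {1..n}" if "X \<in> S" for X using that V vfacts by blast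
  note FA = F[OF inS(1)] and FB = F[OF inS(2)] and FC = F[OF inS(3)] and FD = F[OF inS(4)]
    and FE = F[OF inS(5)]
  have P: "card (X \<inter> Y) + n < 3 * r" if "X \<in> S" "Y \<in> S" "X \<noteq> Y" for X Y
    using packD[OF assms(2)] that by blast
  have U: "card (A \<union> B \<union> C \<union> D \<union> E) \<le> n"
  proof -
    have "A \<union> B \<union> C \<union> D \<union> E \<subseteq> {1..n}" using FA FB FC FD FE by blast
    from card_mono[OF _ this] show ?thesis by simp
  qed
  have "card A + card B + card C + card D + card E \<le> card (A \<union> B \<union> C \<union> D \<union> E) + card (A \<inter> B) + card (A \<inter> C)
     + card (A \<inter> D) + card (A \<inter> E) + card (B \<inter> C) + card (B \<inter> D) + card (B \<inter> E) + card (C \<inter> D)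
     + card (C \<inter> E) + card (D \<inter> E)"
    by (rule b5[OF FA[THEN conjunct1] FB[THEN conjunct1] FC[THEN conjunct1] FD[THEN conjunct1] FE[THEN conjunct1]])
  moreover have "card A = r" "card B = r" "card C = r" "card D = r" "card E = r" using FA FB FC FD FE by blast+
  moreover have "card (A \<inter> B) + n < 3 * r" "card (A \<inter> C) + n < 3 * r" "card (A \<inter> D) + n < 3 * r"
    "card (A \<inter> E) + n < 3 * r"
    "card (B \<inter> C) + n < 3 * r" "card (B \<inter> D) + n < 3 * r" "card (B \<inter> E) + n < 3 * r"
    "card (C \<inter> D) + n < 3 * r" "card (C \<inter> E) + n < 3 * r" "card (D \<inter> E) + n < 3 * r"
    using P[OF inS(1) inS(2) ne(1)] P[OF inS(1) inS(3) ne(2)] P[OF inS(1) inS(4) ne(3)] P[OF inS(1) inS(5) ne(4)] P[OF inS(2) inS(3) ne(5)] P[OF inS(2) inS(4) ne(6)] P[OF inS(2) inS(5) ne(7)] P[OF inS(3) inS(4) ne(8)] P[OF inS(3) inS(5) ne(9)] P[OF inS(4) inS(5) ne(10)] by simp_all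
  ultimately show ?thesis by (rule arith5[OF _ _ _ _ _ _ U])
qed


lemma card_Ub2:
  assumes "t \<le> x"
  shows "card ({1..<t} \<union> {x..<x+q}) = t - 1 + q"
proof -
  have "{1..<t} \<inter> {x..<x+q} = {}" using assms by auto
  then show ?thesis by (simp add: card_Un_disjoint)
qed

lemma Int_b2:
  assumes "t \<le> x" "x + q \<le> (y::nat)"
  shows "({1..<t} \<union> {x..<x+q}) \<inter> ({1..<t} \<union> {y..<y+q}) = {1..<t}"
  using assms by (auto simp: set_eq_iff)

lemma lower3:
  fixes r n t :: nat
  assumes "2 \<le> t" "t + 1 \<le> r" "n = 3 * r - t"
  shows "\<exists>S. finite S \<and> is_2_packing (kneser_vertices n r) (kneser_adj n r) S \<and> card S = 3"
proof -
  define q where "q = r + 1 - t"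
  define X where "X = (\<lambda>i::nat. {1..<t} \<union> {t + i * q..<t + i * q + q})"
  have V: "X i \<in> kneser_vertices n r" if "i < 3" for i
  proof -
    have "card (X i) = t - 1 + q" unfolding X_def by (rule card_Ub2) simp
    moreover have "X i \<subseteq> {1..n}"
    proof -
      have "i * q \<le> 2 * q" using that by simp
      then have h: "t + i * q + q \<le> n + 1" using assms q_def by linarith
      then show ?thesis unfolding X_def using assms(1) by auto
    qed
    ultimately show ?thesis using assms q_def by (simp add: kneser_vertices_def)
  qed
  have G: "good n r (X i) (X j)" if "i < j" for i j
  proof -
    have "Suc i * q \<le> j * q" using that by (intro mult_le_mono1) simp
    then have "i * q + q \<le> j * q" by simp
    then have "X i \<inter> X j = {1..<t}" unfolding X_def by (intro Int_b2) auto
    then show ?thesis using assms by (auto simp: good_def)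
  qed
  have "is_2_packing (kneser_vertices n r) (kneser_adj n r) {X 0, X 1, X 2} \<and> card {X 0, X 1, X 2} = 3"
    by (rule pack3[OF V[of 0] V[of 1] V[of 2] G[of 0 1] G[of 0 2] G[of 1 2]]) simp_all
  then show ?thesis by (intro exI[of _ "{X 0, X 1, X 2}"]) simp
qed

lemma card_U4:
  assumes "s1 + l1 \<le> s2" "s2 + l2 \<le> s3" "s3 + l3 \<le> (s4::nat)"
  shows "card ({s1..<s1+l1} \<union> {s2..<s2+l2} \<union> {s3..<s3+l3} \<union> {s4..<s4+l4}) = l1 + l2 + l3 + l4"
proof -
  have "{s1..<s1+l1} \<inter> {s2..<s2+l2} = {}" using assms by auto
  then have 1: "card ({s1..<s1+l1} \<union> {s2..<s2+l2}) = l1 + l2" by (simp add: card_Un_disjoint)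
  have "({s1..<s1+l1} \<union> {s2..<s2+l2}) \<inter> {s3..<s3+l3} = {}" using assms by auto
  then have 2: "card ({s1..<s1+l1} \<union> {s2..<s2+l2} \<union> {s3..<s3+l3}) = l1 + l2 + l3"
    using 1 by (simp add: card_Un_disjoint)
  have "({s1..<s1+l1} \<union> {s2..<s2+l2} \<union> {s3..<s3+l3}) \<inter> {s4..<s4+l4} = {}" using assms by auto
  then show ?thesis using 2 by (simp add: card_Un_disjoint)
qed

lemma lower4:
  fixes r n t :: nat
  assumes "2 \<le> t" "3 * (t - 1) \<le> r" "r + 6 \<le> 5 * t" "n = 3 * r - t"
  shows "\<exists>S. finite S \<and> is_2_packing (kneser_vertices n r) (kneser_adj n r) S \<and> card S = 4"
proof -
  define a where "a = t - 1"
  define p where "p = r - 3 * a"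
  have a1: "1 \<le> a" using assms a_def by simp
  have tot: "6 * a + 4 * p \<le> n" using assms a_def p_def by simp
  define B where "B = (\<lambda>k::nat. {1 + k * a..<1 + k * a + a})"
  define P where "P = (\<lambda>k::nat. {1 + 6 * a + k * p..<1 + 6 * a + k * p + p})"
  define Y1 where "Y1 = B 0 \<union> B 1 \<union> B 2 \<union> P 0"
  define Y2 where "Y2 = B 0 \<union> B 3 \<union> B 4 \<union> P 1"
  define Y3 where "Y3 = B 1 \<union> B 3 \<union> B 5 \<union> P 2"
  define Y4 where "Y4 = B 2 \<union> B 4 \<union> B 5 \<union> P 3"
  have rr: "a + a + a + p = r" using assms a_def p_def by simp
  have sub: "Y \<subseteq> {1..n}" if "Y \<subseteq> {1..<1 + 6 * a + 4 * p}" for Y using that tot by auto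
  have V: "Y1 \<in> kneser_vertices n r" "Y2 \<in> kneser_vertices n r" "Y3 \<in> kneser_vertices n r" "Y4 \<in> kneser_vertices n r"
  proof -
    have "card Y1 = a + a + a + p" unfolding Y1_def B_def P_def by (rule card_U4) auto
    moreover have "Y1 \<subseteq> {1..n}" by (rule sub) (auto simp: Y1_def B_def P_def)
    ultimately show "Y1 \<in> kneser_vertices n r" using rr by (simp add: kneser_vertices_def)
  next
    have "card Y2 = a + a + a + p" unfolding Y2_def B_def P_def by (rule card_U4) auto
    moreover have "Y2 \<subseteq> {1..n}" by (rule sub) (auto simp: Y2_def B_def P_def)
    ultimately show "Y2 \<in> kneser_vertices n r" using rr by (simp add: kneser_vertices_def)
  next
    have "card Y3 = a + a + a + p" unfolding Y3_def B_def P_def by (rule card_U4) auto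
    moreover have "Y3 \<subseteq> {1..n}" by (rule sub) (auto simp: Y3_def B_def P_def)
    ultimately show "Y3 \<in> kneser_vertices n r" using rr by (simp add: kneser_vertices_def)
  next
    have "card Y4 = a + a + a + p" unfolding Y4_def B_def P_def by (rule card_U4) auto
    moreover have "Y4 \<subseteq> {1..n}" by (rule sub) (auto simp: Y4_def B_def P_def)
    ultimately show "Y4 \<in> kneser_vertices n r" using rr by (simp add: kneser_vertices_def)
  qed
  have GB: "good n r X Y" if "X \<inter> Y = B k" for X Y k
    using that assms a1 a_def by (auto simp: good_def B_def)
  have "Y1 \<inter> Y2 = B 0" "Y1 \<inter> Y3 = B 1" "Y1 \<inter> Y4 = B 2" "Y2 \<inter> Y3 = B 3" "Y2 \<inter> Y4 = B 4" "Y3 \<inter> Y4 = B 5"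
    unfolding Y1_def Y2_def Y3_def Y4_def B_def P_def using a1 by auto
  then have "is_2_packing (kneser_vertices n r) (kneser_adj n r) {Y1, Y2, Y3, Y4} \<and> card {Y1, Y2, Y3, Y4} = 4"
    by (intro pack4 V) (auto intro: GB)
  then show ?thesis by (intro exI[of _ "{Y1, Y2, Y3, Y4}"]) simp
qed


theorem theorem4p8:
  fixes r n t :: nat
  assumes "0 < r" and "2 \<le> t" and "t \<le> r - 1" and "n = 3 * r - t"
  shows "(real t \<le> (real r + 5) / 5 \<longrightarrow> rho2_kneser n r = 3)
       \<and> ((real r + 5) / 5 < real t \<and> real t \<le> (2 * real r + 9) / 9 \<longrightarrow> rho2_kneser n r = 4)"
proof (intro conjI impI)
  assume h: "real t \<le> (real r + 5) / 5"
  have "real (5 * t) \<le> real (r + 5)" using h by simp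
  then have h5: "5 * t \<le> r + 5" by (simp only: of_nat_le_iff)
  obtain S where S: "finite S" "is_2_packing (kneser_vertices n r) (kneser_adj n r) S" "card S = 3"
  proof -
    have "t + 1 \<le> r" using assms(1,3) by linarith
    from lower3[OF assms(2) this assms(4)] show ?thesis using that by blast
  qed
  show "rho2_kneser n r = 3"
  proof (rule rho_eqI[OF S])
    fix S' assume "finite S'" "is_2_packing (kneser_vertices n r) (kneser_adj n r) S'"
    show "card S' \<le> 3"
    proof (rule ccontr)
      assume "\<not> card S' \<le> 3"
      then have "4 * r + 5 * n + 6 \<le> 18 * r"
        using upper4[OF \<open>finite S'\<close> \<open>is_2_packing _ _ S'\<close>] by simp
      then show False using h5 assms by simp
    qed
  qed
next
  assume h: "(real r + 5) / 5 < real t \<and> real t \<le> (2 * real r + 9) / 9"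
  have "real (r + 5) < real (5 * t)" "real (9 * t) \<le> real (2 * r + 9)" using h by simp_all
  then have h5: "r + 5 < 5 * t" and h9: "9 * t \<le> 2 * r + 9" by (simp_all only: of_nat_le_iff of_nat_less_iff)
  obtain S where S: "finite S" "is_2_packing (kneser_vertices n r) (kneser_adj n r) S" "card S = 4"
  proof -
    have "3 * (t - 1) \<le> r" using h9 assms(2) by linarith
    moreover have "r + 6 \<le> 5 * t" using h5 by linarith
    ultimately show ?thesis using lower4[OF assms(2) _ _ assms(4)] that by blast
  qed
  show "rho2_kneser n r = 4"
  proof (rule rho_eqI[OF S])
    fix S' assume "finite S'" "is_2_packing (kneser_vertices n r) (kneser_adj n r) S'"
    show "card S' \<le> 4"
    proof (rule ccontr)
      assume "\<not> card S' \<le> 4"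
      then have "5 * r + 9 * n + 10 \<le> 30 * r"
        using upper5[OF \<open>finite S'\<close> \<open>is_2_packing _ _ S'\<close>] by simp
      then show False using h9 assms by simp
    qed
  qed
qed

end
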